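(* Let $\Omega\subset\mathbb{R}^3$ be a domain and $\mathbf{x}=\boldsymbol{\chi}(\mathbf{X})$ a smooth, one-to-one, invertible map of $\Omega$ onto $\omega$, with deformation gradient $F_{iI}=\partial x_i/\partial X_I$, Jacobian $\Lambda=\det\mathbf{F}>0$, and polar decomposition $\mathbf{F}=\mathbf{V}\mathbf{R}$ ($\mathbf{R}$ proper orthogonal, $\mathbf{V}$ symmetric positive definite with $\mathbf{V}^2=\mathbf{F}\mathbf{F}^t$). Define the vector field $\mathbf{b}(\mathbf{X})$ with components $b_K=R_{jK}\,\partial R_{jM}/\partial X_M$, i.e. $\mathbf{b}=\mathbf{R}^t\,\mathrm{Div}\,\mathbf{R}^t$, and suppose $\mathrm{Curl}\,\mathbf{b}=\nabla_{\mathbf{X}}\wedge\mathbf{b}=0$ in $\Omega$. Let $\beta$ be a function on $\Omega$ with $\nabla_{\mathbf{X}}\beta=\mathbf{b}$. Let $\kappa_0,\rho_0>0$ be constants. Then the normal acoustic fluid with energy density $$E_0=\kappa_0\big(\partial U_I/\partial X_I\big)^2+\rho_0\,\dot{\mathbf{U}}\cdot\dot{\mathbf{U}}\quad\text{in }\Omega$$ can be mapped to a metafluid with isotropic inertia, with energy density $$E=\lambda\big(V_{ij}\,\partial u_j/\partial x_i\big)^2+\rho\,\dot{\mathbf{u}}\cdot\dot{\mathbf{u}}\quad\text{in }\omega,\qquad \lambda=\Lambda^{-1}e^{-2\beta}\kappa_0,\quad \rho=\Lambda^{-1}e^{-2\beta}\rho_0,$$ in the sense that these energy densities are equivalent ($E\,\mathrm{d}v=E_0\,\mathrm{d}V$)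 under the correspondence of displacements $\mathbf{u}=e^{\beta}\mathbf{R}\mathbf{U}$.
   Context: Repeated indices are summed; upper-case indices refer to undeformed coordinates $\mathbf{X}$, lower-case to deformed coordinates $\mathbf{x}$; $\mathrm{d}v=\Lambda\,\mathrm{d}V$. Quantities in $\omega$ are evaluated at $\mathbf{x}=\boldsymbol{\chi}(\mathbf{X})$, and $\mathrm{Curl}$ is taken with respect to $\mathbf{X}$. *)

theory Defs
  imports "HOL-Analysis.Analysis"
begin

text \<open>Vector fields on R^3 are functions real^3 => real^3; second-order tensor
 fields are real^3 => real^3^3, with A $ i $ j the (i,j) component.
 For a map f, jacobian f (at X) $ i $ j = partial f_i / partial X_j.\<close>

definition defgrad :: "(real^3 \<Rightarrow> real^3) \<Rightarrow> real^3 \<Rightarrow> real^3^3" where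
  "defgrad chi X = jacobian chi (at X)"

definition pderiv3 :: "(real^3 \<Rightarrow> real) \<Rightarrow> real^3 \<Rightarrow> 3 \<Rightarrow> real" where
  "pderiv3 f X M = frechet_derivative f (at X) (axis M 1)"

definition div_transp :: "(real^3 \<Rightarrow> real^3^3) \<Rightarrow> real^3 \<Rightarrow> real^3" where
  "div_transp R X = (\<chi> j. \<Sum>M\<in>UNIV. pderiv3 (\<lambda>Y. R Y $ j $ M) X M)"

definition bfield :: "(real^3 \<Rightarrow> real^3^3) \<Rightarrow> real^3 \<Rightarrow> real^3" where
  "bfield R X = transpose (R X) *v div_transp R X"

definition curl3 :: "(real^3 \<Rightarrow> real^3) \<Rightarrow> real^3 \<Rightarrow> real^3" where
  "curl3 b X = (let J = jacobian b (at X) in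
      vector [J $ 3 $ 2 - J $ 2 $ 3, J $ 1 $ 3 - J $ 3 $ 1, J $ 2 $ 1 - J $ 1 $ 2])"

definition E0_density :: "real \<Rightarrow> real \<Rightarrow> (real^3 \<Rightarrow> real \<Rightarrow> real^3) \<Rightarrow> real^3 \<Rightarrow> real \<Rightarrow> real" where
  "E0_density kappa0 rho0 U X t =
     kappa0 * (\<Sum>I\<in>UNIV. jacobian (\<lambda>Y. U Y t) (at X) $ I $ I)\<^sup>2
     + rho0 * (vector_derivative (\<lambda>s. U X s) (at t) \<bullet> vector_derivative (\<lambda>s. U X s) (at t))"

definition E_density :: "real \<Rightarrow> real \<Rightarrow> real^3^3 \<Rightarrow> (real^3 \<Rightarrow> real \<Rightarrow> real^3) \<Rightarrow> real^3 \<Rightarrow> real \<Rightarrow> real" where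
  "E_density lam rho Vx u x t =
     lam * (\<Sum>i\<in>UNIV. \<Sum>j\<in>UNIV. Vx $ i $ j * jacobian (\<lambda>y. u y t) (at x) $ j $ i)\<^sup>2
     + rho * (vector_derivative (\<lambda>s. u x s) (at t) \<bullet> vector_derivative (\<lambda>s. u x s) (at t))"

end

theory Submission
  imports Defs
begin

lemma delta_sum: "(\<Sum>M\<in>UNIV. f M * (if K = M then 1 else 0)) = (f (K::'n::finite) :: real)"
  by (simp add: if_distrib cong: if_cong)
lemma alg:
  fixes r :: "'n::finite \<Rightarrow> 'n \<Rightarrow> real" and d :: "'n \<Rightarrow> 'n \<Rightarrow> 'n \<Rightarrow> real"
    and w :: "'n \<Rightarrow> real" and dw :: "'n \<Rightarrow> 'n \<Rightarrow> real"
  assumes orth: "\<And>K M. (\<Sum>j\<in>UNIV. r j K * r j M) = (if K = M then 1 else 0)"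
    and dorth: "\<And>K A B. (\<Sum>j\<in>UNIV. d K j A * r j B + r j A * d K j B) = 0"
  shows "(\<Sum>K\<in>UNIV. \<Sum>j\<in>UNIV. r j K * ((\<Sum>j'\<in>UNIV. r j' K * (\<Sum>M\<in>UNIV. d M j' M)) * (\<Sum>M\<in>UNIV. r j M * w M)
            + (\<Sum>M\<in>UNIV. d K j M * w M) + (\<Sum>M\<in>UNIV. r j M * dw K M))) = (\<Sum>K\<in>UNIV. dw K K)"
proof -
  have T3: "(\<Sum>K\<in>UNIV. \<Sum>j\<in>UNIV. r j K * (\<Sum>M\<in>UNIV. r j M * dw K M)) = (\<Sum>K\<in>UNIV. dw K K)"
  proof -
    have "\<And>K. (\<Sum>j\<in>UNIV. r j K * (\<Sum>M\<in>UNIV. r j M * dw K M)) = (\<Sum>M\<in>UNIV. dw K M * (\<Sum>j\<in>UNIV. r j K * r j M))"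
      by (simp add: sum_distrib_left mult_ac, rule sum.swap)
    then show ?thesis by (simp add: orth delta_sum)
  qed
  define c where "c K = (\<Sum>j'\<in>UNIV. r j' K * (\<Sum>M\<in>UNIV. d M j' M))" for K
  have T1: "(\<Sum>K\<in>UNIV. \<Sum>j\<in>UNIV. r j K * (c K * (\<Sum>M\<in>UNIV. r j M * w M)))
     = (\<Sum>K\<in>UNIV. c K * w K)"
  proof -
    have "\<And>K. (\<Sum>j\<in>UNIV. r j K * (c K * (\<Sum>M\<in>UNIV. r j M * w M))) = c K * (\<Sum>M\<in>UNIV. w M * (\<Sum>j\<in>UNIV. r j K * r j M))"
      by (simp add: sum_distrib_left mult_ac, rule sum.swap)
    then show ?thesis by (simp add: orth delta_sum)
  qed
  have T1': "(\<Sum>K\<in>UNIV. c K * w K) = (\<Sum>M\<in>UNIV. \<Sum>K\<in>UNIV. w M * (\<Sum>j\<in>UNIV. d K j K * r j M))"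
  proof (rule sum.cong[OF refl])
    fix M
    show "c M * w M = (\<Sum>K\<in>UNIV. w M * (\<Sum>j\<in>UNIV. d K j K * r j M))"
      unfolding c_def by (simp add: sum_distrib_left sum_distrib_right mult_ac, rule sum.swap)
  qed
  have T2: "(\<Sum>K\<in>UNIV. \<Sum>j\<in>UNIV. r j K * (\<Sum>M\<in>UNIV. d K j M * w M))
     = - (\<Sum>K\<in>UNIV. \<Sum>M\<in>UNIV. w M * (\<Sum>j\<in>UNIV. d K j K * r j M))"
  proof -
    have e: "\<And>K M. (\<Sum>j\<in>UNIV. r j K * d K j M) = - (\<Sum>j\<in>UNIV. d K j K * r j M)"
      using dorth by (simp add: sum.distrib eq_neg_iff_add_eq_0 add.commute)
    have "\<And>K. (\<Sum>j\<in>UNIV. r j K * (\<Sum>M\<in>UNIV. d K j M * w M)) = (\<Sum>M\<in>UNIV. w M * (\<Sum>j\<in>UNIV. r j K * d K j M))"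
      by (simp add: sum_distrib_left mult_ac, rule sum.swap)
    then show ?thesis by (simp add: e sum_negf)
  qed
  have T2': "(\<Sum>K\<in>UNIV. \<Sum>M\<in>UNIV. w M * (\<Sum>j\<in>UNIV. d K j K * r j M)) = (\<Sum>M\<in>UNIV. \<Sum>K\<in>UNIV. w M * (\<Sum>j\<in>UNIV. d K j K * r j M))"
    by (rule sum.swap)
  show ?thesis using T1 T1' T2 T2' T3 unfolding c_def[symmetric]
    by (simp add: distrib_left sum.distrib)
qed
lemma hd_vec:
  fixes f :: "'a::real_normed_vector \<Rightarrow> real^'n"
  assumes "\<And>i. ((\<lambda>x. f x $ i) has_derivative (\<lambda>x. f' x $ i)) (at a within S)"
  shows "(f has_derivative f') (at a within S)"
  apply (subst has_derivative_componentwise_within)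
  using assms by (auto simp: Basis_vec_def inner_axis)

lemma hd_comp:
  fixes f :: "'a::real_normed_vector \<Rightarrow> 'b::real_normed_vector^'n"
  assumes "(f has_derivative f') F"
  shows "((\<lambda>x. f x $ i) has_derivative (\<lambda>x. f' x $ i)) F"
  using bounded_linear.has_derivative[OF bounded_linear_vec_nth assms] .

lemma hd_comp2:
  fixes f :: "'a::real_normed_vector \<Rightarrow> real^'n^'m"
  assumes "(f has_derivative f') F"
  shows "((\<lambda>x. f x $ i $ j) has_derivative (\<lambda>x. f' x $ i $ j)) F"
  using hd_comp[OF hd_comp[OF assms]] .
theorem lemma2:
  fixes \<Omega> :: "(real^3) set"
    and chi :: "real^3 \<Rightarrow> real^3"
    and R V :: "real^3 \<Rightarrow> real^3^3"
    and \<beta> :: "real^3 \<Rightarrow> real"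
    and U u :: "real^3 \<Rightarrow> real \<Rightarrow> real^3"
    and \<kappa>0 \<rho>0 :: real
  assumes domain: "open \<Omega>" "connected \<Omega>"
    and chi_diff: "chi differentiable_on \<Omega>"
    and chi_inj: "inj_on chi \<Omega>"
    and omega_open: "open (chi ` \<Omega>)"
    and chi_inv_diff: "inv_into \<Omega> chi differentiable_on (chi ` \<Omega>)"
    and jac_pos: "\<forall>X\<in>\<Omega>. det (defgrad chi X) > 0"
    and polar: "\<forall>X\<in>\<Omega>. orthogonal_matrix (R X) \<and> det (R X) = 1
                   \<and> transpose (V X) = V X \<and> (\<forall>v. v \<noteq> 0 \<longrightarrow> v \<bullet> (V X *v v) > 0)
                   \<and> defgrad chi X = V X ** R X"
    and R_diff: "\<forall>X\<in>\<Omega>. R differentiable (at X)"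
    and curl_b: "\<forall>X\<in>\<Omega>. curl3 (bfield R) X = 0"
    and grad_beta: "\<forall>X\<in>\<Omega>. (\<beta> has_derivative (\<lambda>h. bfield R X \<bullet> h)) (at X)"
    and pos_consts: "\<kappa>0 > 0" "\<rho>0 > 0"
    and U_diff: "\<forall>X\<in>\<Omega>. \<forall>t. (\<lambda>Y. U Y t) differentiable (at X) \<and> (\<lambda>s. U X s) differentiable (at t)"
    and corresp: "\<forall>X\<in>\<Omega>. \<forall>t. u (chi X) t = exp (\<beta> X) *\<^sub>R (R X *v U X t)"
  shows "\<forall>X\<in>\<Omega>. \<forall>t.
           E_density (inverse (det (defgrad chi X)) * exp (-2 * \<beta> X) * \<kappa>0)
                     (inverse (det (defgrad chi X)) * exp (-2 * \<beta> X) * \<rho>0)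
                     (V X) u (chi X) t * det (defgrad chi X)
           = E0_density \<kappa>0 \<rho>0 U X t"
  
proof (intro ballI allI)
  fix X t assume XO: "X \<in> \<Omega>"
  define g where "g = inv_into \<Omega> chi"
  define x where "x = chi X"
  define \<Lambda> where "\<Lambda> = det (defgrad chi X)"
  have Lpos: "\<Lambda> > 0" using jac_pos XO unfolding \<Lambda>_def by blast
  have oR: "orthogonal_matrix (R X)" and FVR: "defgrad chi X = V X ** R X"
    using polar XO by blast+
  have xo: "x \<in> chi ` \<Omega>" unfolding x_def using XO by blast
  have gx: "g x = X" unfolding g_def x_def using inv_into_f_f[OF chi_inj XO] by simp
  have chi_d: "chi differentiable (at X)"
    using chi_diff domain(1) XO differentiable_on_eq_differentiable_at by blast
  define Dc where "Dc = frechet_derivative chi (at X)"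
  have chiD: "(chi has_derivative Dc) (at X)" using chi_d frechet_derivative_works Dc_def by blast
  have g_d: "g differentiable (at x)"
    using chi_inv_diff omega_open xo differentiable_on_eq_differentiable_at unfolding g_def by blast
  define Dg where "Dg = frechet_derivative g (at x)"
  have gD: "(g has_derivative Dg) (at x)" using g_d frechet_derivative_works Dg_def by blast
  have c1: "((\<lambda>y. chi (g y)) has_derivative (\<lambda>h. Dc (Dg h))) (at x)"
    using has_derivative_compose[OF gD] chiD gx by simp
  have c2: "((\<lambda>y. chi (g y)) has_derivative (\<lambda>h. h)) (at x)"
  proof (rule has_derivative_transform_within_open[OF has_derivative_ident omega_open xo])
    fix y assume "y \<in> chi ` \<Omega>" then show "y = chi (g y)" unfolding g_def by (simp add: f_inv_into_f)
  qed
  have DcDg: "(\<lambda>h. Dc (Dg h)) = (\<lambda>h. h)" using has_derivative_unique[OF c1 c2] .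
  have linDc: "linear Dc" using chiD has_derivative_linear by blast
  have linDg: "linear Dg" using gD has_derivative_linear by blast
  have FJg: "defgrad chi X ** matrix Dg = mat 1"
  proof -
    have "matrix (Dc \<circ> Dg) = matrix Dc ** matrix Dg" using matrix_compose[OF linDg linDc] .
    moreover have "Dc \<circ> Dg = id" using DcDg by (simp add: o_def id_def)
    ultimately show ?thesis unfolding defgrad_def jacobian_def Dc_def[symmetric]
      by (simp add: matrix_id_mat_1)
  qed
  define W where "W = (\<lambda>Y. U Y t)"
  have W_d: "W differentiable (at X)" using U_diff XO unfolding W_def by blast
  define DW where "DW = frechet_derivative W (at X)"
  have WD: "(W has_derivative DW) (at X)" using W_d frechet_derivative_works DW_def by blast
  define DR where "DR = frechet_derivative R (at X)"
  have RD: "(R has_derivative DR) (at X)" using R_diff XO frechet_derivative_works DR_def by blast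
  define b where "b = bfield R X"
  have bD: "(\<beta> has_derivative (\<lambda>h. b \<bullet> h)) (at X)" using grad_beta XO unfolding b_def by blast
  define h where "h = (\<lambda>Y. exp (\<beta> Y) *\<^sub>R (R Y *v W Y))"
  define Dh where "Dh = (\<lambda>v. exp (\<beta> X) *\<^sub>R ((b \<bullet> v) *\<^sub>R (R X *v W X) + (DR v *v W X) + (R X *v DW v)))"
  have hD: "(h has_derivative Dh) (at X)"
  proof (rule hd_vec)
    fix j
    have e: "(\<lambda>Y. h Y $ j) = (\<lambda>Y. exp (\<beta> Y) * (\<Sum>M\<in>UNIV. R Y $ j $ M * W Y $ M))"
      by (simp add: h_def matrix_vector_mult_def)
    have "((\<lambda>Y. exp (\<beta> Y) * (\<Sum>M\<in>UNIV. R Y $ j $ M * W Y $ M)) has_derivative (\<lambda>v. Dh v $ j)) (at X)"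
      apply (rule has_derivative_eq_rhs)
       apply (rule has_derivative_mult)
       apply (rule has_derivative_exp)
      apply (rule bD)
     apply (rule has_derivative_sum)
     apply (rule has_derivative_mult)
      apply (rule hd_comp2[OF RD])
     apply (rule hd_comp[OF WD])
      apply (simp add: Dh_def fun_eq_iff matrix_vector_mult_def sum.distrib algebra_simps sum_distrib_left)
      done
    then show "((\<lambda>Y. h Y $ j) has_derivative (\<lambda>v. Dh v $ j)) (at X)" using e by simp
  qed
  have hu: "((\<lambda>y. u y t) has_derivative (\<lambda>v. Dh (Dg v))) (at x)"
  proof (rule has_derivative_transform_within_open[OF _ omega_open xo])
    show "((\<lambda>y. h (g y)) has_derivative (\<lambda>v. Dh (Dg v))) (at x)"
      using has_derivative_compose[OF gD] hD gx by simp
    fix y assume "y \<in> chi ` \<Omega>"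
    then obtain Y where Y: "Y \<in> \<Omega>" "y = chi Y" by blast
    then have "g y = Y" unfolding g_def using inv_into_f_f[OF chi_inj] by simp
    then show "h (g y) = u y t" using corresp Y unfolding h_def W_def by simp
  qed
  have linDh: "linear Dh" using hD has_derivative_linear by blast
  have Ju: "jacobian (\<lambda>y. u y t) (at x) = matrix Dh ** matrix Dg"
    unfolding jacobian_def frechet_derivative_at[OF hu, symmetric]
    using matrix_compose[OF linDg linDh] by (simp add: o_def)
  have JgF: "matrix Dg ** (V X ** R X) = mat 1" using FJg FVR matrix_left_right_inverse by metis
  have JgV: "matrix Dg ** V X = transpose (R X)"
  proof -
    have "matrix Dg ** V X = (matrix Dg ** V X) ** (R X ** transpose (R X))"
      using oR by (simp add: orthogonal_matrix_def)
    also have "\<dots> = (matrix Dg ** (V X ** R X)) ** transpose (R X)" by (simp add: matrix_mul_assoc)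
    also have "\<dots> = transpose (R X)" using JgF by simp
    finally show ?thesis .
  qed
  have S1: "(\<Sum>i\<in>UNIV. \<Sum>j\<in>UNIV. V X $ i $ j * jacobian (\<lambda>y. u y t) (at x) $ j $ i)
      = trace (transpose (R X) ** matrix Dh)"
  proof -
    have "(\<Sum>i\<in>UNIV. \<Sum>j\<in>UNIV. V X $ i $ j * jacobian (\<lambda>y. u y t) (at x) $ j $ i)
        = trace (V X ** (matrix Dh ** matrix Dg))"
      by (simp add: Ju trace_def matrix_matrix_mult_def)
    also have "\<dots> = trace (matrix Dg ** (V X ** matrix Dh))" by (metis matrix_mul_assoc trace_mul_sym)
    also have "\<dots> = trace (transpose (R X) ** matrix Dh)" by (metis matrix_mul_assoc JgV)
    finally show ?thesis .
  qed
  have S2: "trace (transpose (R X) ** matrix Dh) = (\<Sum>K\<in>UNIV. \<Sum>j\<in>UNIV. R X $ j $ K * Dh (axis K 1) $ j)"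
    by (simp add: trace_def matrix_matrix_mult_def transpose_def matrix_def)
  have pd: "pderiv3 (\<lambda>Y. R Y $ j $ M) X M = DR (axis M 1) $ j $ M" for j M
  proof -
    have "(\<lambda>v. DR v $ j $ M) = frechet_derivative (\<lambda>Y. R Y $ j $ M) (at X)"
      by (rule frechet_derivative_at[OF hd_comp2[OF RD]])
    then show ?thesis unfolding pderiv3_def by metis
  qed
  have bK: "b $ K = (\<Sum>j'\<in>UNIV. R X $ j' $ K * (\<Sum>M\<in>UNIV. DR (axis M 1) $ j' $ M))" for K
    by (simp add: b_def bfield_def div_transp_def matrix_vector_mult_def transpose_def pd)
  have Dhc: "Dh (axis K 1) $ j = exp (\<beta> X) * ((\<Sum>j'\<in>UNIV. R X $ j' $ K * (\<Sum>M\<in>UNIV. DR (axis M 1) $ j' $ M))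
      * (\<Sum>M\<in>UNIV. R X $ j $ M * W X $ M) + (\<Sum>M\<in>UNIV. DR (axis K 1) $ j $ M * W X $ M)
      + (\<Sum>M\<in>UNIV. R X $ j $ M * DW (axis K 1) $ M))" for K j
    by (simp add: Dh_def matrix_vector_mult_def inner_axis bK)
  have orth: "(\<Sum>j\<in>UNIV. R X $ j $ K * R X $ j $ M) = (if K = M then 1 else 0)" for K M
  proof -
    have "(transpose (R X) ** R X) $ K $ M = mat 1 $ K $ M" using oR by (simp add: orthogonal_matrix_def)
    then show ?thesis by (simp add: matrix_matrix_mult_def transpose_def mat_def)
  qed
  have dorth: "(\<Sum>j\<in>UNIV. DR (axis K 1) $ j $ A * R X $ j $ B + R X $ j $ A * DR (axis K 1) $ j $ B) = 0" for K A B
  proof -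
    define f where "f = (\<lambda>Y. \<Sum>j\<in>UNIV. R Y $ j $ A * R Y $ j $ B)"
    have d1: "(f has_derivative (\<lambda>v. \<Sum>j\<in>UNIV. R X $ j $ A * DR v $ j $ B + DR v $ j $ A * R X $ j $ B)) (at X)"
      unfolding f_def by (intro has_derivative_sum has_derivative_mult hd_comp2[OF RD])
    have d2: "(f has_derivative (\<lambda>v. 0)) (at X)"
    proof (rule has_derivative_transform_within_open[OF has_derivative_const domain(1) XO])
      fix Y assume "Y \<in> \<Omega>"
      then have "orthogonal_matrix (R Y)" using polar by blast
      then have "(transpose (R Y) ** R Y) $ A $ B = mat 1 $ A $ B" by (simp add: orthogonal_matrix_def)
      then show "(if A = B then 1 else 0) = f Y"
        by (simp add: f_def matrix_matrix_mult_def transpose_def mat_def)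
    qed
    have "(\<lambda>v. \<Sum>j\<in>UNIV. R X $ j $ A * DR v $ j $ B + DR v $ j $ A * R X $ j $ B) = (\<lambda>v. 0)"
      using has_derivative_unique[OF d1 d2] .
    then have "(\<Sum>j\<in>UNIV. R X $ j $ A * DR (axis K 1) $ j $ B + DR (axis K 1) $ j $ A * R X $ j $ B) = 0"
      by metis
    then show ?thesis by (simp add: add.commute)
  qed
  have S3: "(\<Sum>K\<in>UNIV. \<Sum>j\<in>UNIV. R X $ j $ K * Dh (axis K 1) $ j) = exp (\<beta> X) * (\<Sum>K\<in>UNIV. DW (axis K 1) $ K)"
  proof -
    have "(\<Sum>K\<in>UNIV. \<Sum>j\<in>UNIV. R X $ j $ K * Dh (axis K 1) $ j)
      = exp (\<beta> X) * (\<Sum>K\<in>UNIV. \<Sum>j\<in>UNIV. R X $ j $ K * ((\<Sum>j'\<in>UNIV. R X $ j' $ K * (\<Sum>M\<in>UNIV. DR (axis M 1) $ j' $ M))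
      * (\<Sum>M\<in>UNIV. R X $ j $ M * W X $ M) + (\<Sum>M\<in>UNIV. DR (axis K 1) $ j $ M * W X $ M)
      + (\<Sum>M\<in>UNIV. R X $ j $ M * DW (axis K 1) $ M)))"
      unfolding Dhc sum_distrib_left by (simp add: mult.left_commute)
    also have "\<dots> = exp (\<beta> X) * (\<Sum>K\<in>UNIV. DW (axis K 1) $ K)"
      using alg[of "\<lambda>j K. R X $ j $ K" "\<lambda>K j M. DR (axis K 1) $ j $ M" "\<lambda>M. W X $ M" "\<lambda>K M. DW (axis K 1) $ M"]
        orth dorth by simp
    finally show ?thesis .
  qed
  have divU: "(\<Sum>I\<in>UNIV. jacobian (\<lambda>Y. U Y t) (at X) $ I $ I) = (\<Sum>K\<in>UNIV. DW (axis K 1) $ K)"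
    by (simp add: jacobian_def W_def[symmetric] DW_def[symmetric] matrix_def)
  define U' where "U' = vector_derivative (\<lambda>s. U X s) (at t)"
  have UD: "((\<lambda>s. U X s) has_vector_derivative U') (at t)"
    using U_diff XO vector_derivative_works U'_def by blast
  have ueq: "(\<lambda>s. u x s) = (\<lambda>s. exp (\<beta> X) *\<^sub>R (R X *v U X s))" using corresp XO x_def by auto
  have blin: "bounded_linear (\<lambda>v. exp (\<beta> X) *\<^sub>R (R X *v (v::real^3)))"
    using real_vector.module_hom_scale[OF matrix_vector_mul_linear] linear_conv_bounded_linear by blast
  have "((\<lambda>s. exp (\<beta> X) *\<^sub>R (R X *v U X s)) has_vector_derivative exp (\<beta> X) *\<^sub>R (R X *v U')) (at t)"
    using bounded_linear.has_vector_derivative[OF blin UD] by simp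
  then have vd: "vector_derivative (\<lambda>s. u x s) (at t) = exp (\<beta> X) *\<^sub>R (R X *v U')"
    unfolding ueq by (rule vector_derivative_at)
  have ot: "orthogonal_transformation ((*v) (R X))"
    by (simp add: orthogonal_transformation_matrix oR)
  have kin: "vector_derivative (\<lambda>s. u x s) (at t) \<bullet> vector_derivative (\<lambda>s. u x s) (at t) = (exp (\<beta> X))\<^sup>2 * (U' \<bullet> U')"
    using ot unfolding vd orthogonal_transformation_def by (simp add: power2_eq_square)
  have ex: "exp (- 2 * \<beta> X) * (exp (\<beta> X))\<^sup>2 = 1"
    by (simp add: power2_eq_square flip: exp_add)
  show "E_density (inverse (det (defgrad chi X)) * exp (-2 * \<beta> X) * \<kappa>0)
                     (inverse (det (defgrad chi X)) * exp (-2 * \<beta> X) * \<rho>0)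
                     (V X) u (chi X) t * det (defgrad chi X)
           = E0_density \<kappa>0 \<rho>0 U X t"
    unfolding E_density_def E0_density_def \<Lambda>_def[symmetric] x_def[symmetric] S1 S2 S3 kin divU U'_def[symmetric]
    using Lpos ex by (simp add: field_simps power_mult_distrib)
qed

end
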